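(* Let $q<0$ with $\mathbb P(\omega_1<q)>0$, let $A\in2\mathbb N$ and $\varepsilon>0$. For $M\in2\mathbb N$ define $$\tau_{M,q}(\omega):=\inf\Big\{n\in2\mathbb N:\ \exists k\in2\mathbb N,\ k\ge M,\ \frac1k\sum_{i=n-k+1}^n\omega_i\le q\Big\},$$ $$\ell(\omega)=\ell_{A,\varepsilon,q}(\omega):=\inf\Big\{k\in2\mathbb N,\ k\ge A:\ \frac{\log\tau_{k,q}(\omega)}{k}\le\Sigma(q)+\varepsilon\Big\},$$ and $T(\omega)=T_{A,\varepsilon,q}(\omega):=\tau_{\ell(\omega),q}(\omega)$. Then $\mathbb E[T_{A,\varepsilon,q}]<\infty$.
   Context: $\omega=(\omega_n)_{n\ge1}$ is a sequence of i.i.d. real random variables with law $\mathbb P$ (expectation $\mathbb E$) such that $\mathsf M(\alpha):=\mathbb E[e^{\alpha\omega_1}]<\infty$ for all $\alpha\in\mathbb R$, $\mathbb E[\omega_1]=0$, $\mathbb E[\omega_1^2]=1$. $\Sigma(q):=\sup_{\alpha\in\mathbb R}\{\alpha q-\log\mathsf M(\alpha)\}$ is the Cramér rate function. In the sums defining $\tau_{M,q}$, indices $i\le0$ are not allowed (i.e. one requires $n-k\ge0$). *)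

theory Defs
  imports "HOL-Probability.Probability"
begin

text \<open>Throughout, 2N denotes the positive even integers {2,4,6,...}.
  A realisation of the sequence is a function w :: nat => real; only indices i >= 1 are used.\<close>

definition cramer_rate :: "'a measure \<Rightarrow> ('a \<Rightarrow> real) \<Rightarrow> real \<Rightarrow> ereal" where
  "cramer_rate M Y q = (SUP \<alpha>::real. ereal (\<alpha> * q - ln (\<integral>x. exp (\<alpha> * Y x) \<partial>M)))"

definition tau :: "(nat \<Rightarrow> real) \<Rightarrow> nat \<Rightarrow> real \<Rightarrow> enat" where
  "tau w Mk q = Inf {enat n | n. even n \<and> n > 0 \<and>
     (\<exists>k. even k \<and> k > 0 \<and> k \<ge> Mk \<and> k \<le> n \<and>
          (1 / real k) * (\<Sum>i\<in>{n - k + 1..n}. w i) \<le> q)}"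

definition ell :: "(nat \<Rightarrow> real) \<Rightarrow> ereal \<Rightarrow> nat \<Rightarrow> real \<Rightarrow> real \<Rightarrow> enat" where
  "ell w Sig A eps q = Inf {enat k | k. even k \<and> k > 0 \<and> k \<ge> A \<and>
     (\<exists>t. tau w k q = enat t \<and> ereal (ln (real t) / real k) \<le> Sig + ereal eps)}"

definition T_time :: "(nat \<Rightarrow> real) \<Rightarrow> ereal \<Rightarrow> nat \<Rightarrow> real \<Rightarrow> real \<Rightarrow> enat" where
  "T_time w Sig A eps q = (case ell w Sig A eps q of enat k \<Rightarrow> tau w k q | \<infinity> \<Rightarrow> \<infinity>)"

end

theory Submission
  imports Defs
begin

lemma sinh_bound: "\<bar>exp (v::real) - exp (- v)\<bar> \<le> 2 * \<bar>v\<bar> * exp \<bar>v\<bar>"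
proof -
  have key: "exp w - exp (- w) \<le> 2 * w * exp w" if "w \<ge> 0" for w :: real
  proof -
    have "exp (- (2*w)) \<ge> 1 - 2*w" using exp_ge_add_one_self[of "-(2*w)"] by simp
    then have "1 - exp (- (2*w)) \<le> 2 * w" by simp
    then have "exp w * (1 - exp (- (2*w))) \<le> exp w * (2 * w)" by (intro mult_left_mono) auto
    moreover have "exp w * exp (- (2*w)) = exp (- w)" by (simp add: exp_add[symmetric])
    ultimately show ?thesis by (simp add: algebra_simps)
  qed
  show ?thesis
  proof (cases "v \<ge> 0")
    case True
    have "exp (- v) \<le> exp v" using True by simp
    then show ?thesis using key[OF True] True by simp
  next
    case False
    have "exp v \<le> exp (- v)" using False by simp
    then show ?thesis using key[of "-v"] False by simp
  qed
qed

lemma cosh_bound: "exp (u::real) + exp (- u) - 2 \<le> u\<^sup>2 * exp \<bar>u\<bar>"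
proof -
  have e: "exp u + exp (- u) - 2 = (exp (u/2) - exp (- (u/2)))\<^sup>2"
    by (simp add: power2_eq_square algebra_simps exp_add[symmetric])
  have "(exp (u/2) - exp (- (u/2)))\<^sup>2 = \<bar>exp (u/2) - exp (- (u/2))\<bar>\<^sup>2" by simp
  also have "\<dots> \<le> (2 * \<bar>u/2\<bar> * exp \<bar>u/2\<bar>)\<^sup>2"
    by (intro power_mono sinh_bound) auto
  also have "\<dots> = (\<bar>u\<bar> * exp (\<bar>u\<bar>/2))\<^sup>2" by simp
  also have "\<dots> = \<bar>u\<bar>\<^sup>2 * (exp (\<bar>u\<bar>/2))\<^sup>2" by (simp add: power_mult_distrib)
  also have "(exp (\<bar>u\<bar>/2))\<^sup>2 = exp \<bar>u\<bar>" by (simp add: power2_eq_square exp_add[symmetric])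
  also have "\<bar>u\<bar>\<^sup>2 = u\<^sup>2" by simp
  finally show ?thesis using e by simp
qed

lemma sq_le_exp: "(y::real)\<^sup>2 \<le> 4 * exp \<bar>y\<bar>"
proof -
  have "\<bar>y\<bar>/2 \<le> exp (\<bar>y\<bar>/2)" using exp_ge_add_one_self[of "\<bar>y\<bar>/2"] by linarith
  then have "(\<bar>y\<bar>/2)\<^sup>2 \<le> (exp (\<bar>y\<bar>/2))\<^sup>2" by (intro power_mono) auto
  also have "(exp (\<bar>y\<bar>/2))\<^sup>2 = exp \<bar>y\<bar>" by (simp add: power2_eq_square exp_add[symmetric])
  finally show ?thesis by (simp add: power2_eq_square)
qed

lemma second_diff_pw:
  fixes a h y c :: real
  assumes "\<bar>a\<bar> \<le> R" "\<bar>h\<bar> \<le> 1" "c = R + 2"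
  shows "exp ((a+h)*y) + exp ((a-h)*y) - 2 * exp (a*y) \<le> h\<^sup>2 * (4 * (exp (c*y) + exp (-c*y)))"
proof -
  have "exp ((a+h)*y) + exp ((a-h)*y) - 2 * exp (a*y) = exp (a*y) * (exp (h*y) + exp (-(h*y)) - 2)"
    by (simp add: algebra_simps exp_add[symmetric])
  also have "\<dots> \<le> exp (a*y) * ((h*y)\<^sup>2 * exp \<bar>h*y\<bar>)"
    by (intro mult_left_mono cosh_bound) auto
  also have "\<dots> = h\<^sup>2 * (y\<^sup>2 * exp (a*y + \<bar>h*y\<bar>))"
    by (simp add: power_mult_distrib exp_add algebra_simps)
  also have "\<dots> \<le> h\<^sup>2 * (y\<^sup>2 * exp ((R+1) * \<bar>y\<bar>))"
  proof -
    have "a*y \<le> \<bar>a\<bar> * \<bar>y\<bar>" by (metis abs_ge_self abs_mult)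
    also have "\<dots> \<le> R * \<bar>y\<bar>" using assms(1) by (intro mult_right_mono) auto
    finally have "a*y \<le> R * \<bar>y\<bar>" .
    moreover have "\<bar>h*y\<bar> \<le> \<bar>y\<bar>" using assms(2) by (simp add: abs_mult mult_left_le_one_le)
    ultimately have "a*y + \<bar>h*y\<bar> \<le> (R+1) * \<bar>y\<bar>" by (simp add: algebra_simps)
    then show ?thesis by (intro mult_left_mono) auto
  qed
  also have "\<dots> \<le> h\<^sup>2 * (4 * exp \<bar>y\<bar> * exp ((R+1) * \<bar>y\<bar>))"
    by (intro mult_left_mono mult_right_mono sq_le_exp) auto
  also have "4 * exp \<bar>y\<bar> * exp ((R+1) * \<bar>y\<bar>) = 4 * exp (c * \<bar>y\<bar>)"
    using assms(3) by (simp add: exp_add[symmetric] algebra_simps)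
  also have "exp (c * \<bar>y\<bar>) \<le> exp (c*y) + exp (-c*y)"
    by (cases "y \<ge> 0") auto
  finally show ?thesis by (simp add: mult_left_mono)
qed

declare One_nat_def [simp del]

locale LDsetup = prob_space M for M :: "'a measure" +
  fixes X :: "nat \<Rightarrow> 'a \<Rightarrow> real" and q :: real
  assumes indep: "indep_vars (\<lambda>_. borel) X {1..}"
    and ident: "\<And>i. i \<ge> 1 \<Longrightarrow> distr M borel (X i) = distr M borel (X 1)"
    and expint: "\<And>\<alpha>::real. integrable M (\<lambda>x. exp (\<alpha> * X 1 x))"
    and mean0: "(\<integral>x. X 1 x \<partial>M) = 0"
    and qneg: "q < 0"
    and posq: "measure M {x \<in> space M. X 1 x < q} > 0"
begin

definition f :: "real \<Rightarrow> real" where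
  "f a = (\<integral>x. exp (a * (X 1 x - q)) \<partial>M)"

lemma rv: "i \<ge> 1 \<Longrightarrow> X i \<in> borel_measurable M"
  using indep unfolding indep_vars_def by auto

lemma rv1[measurable]: "X 1 \<in> borel_measurable M"
  using rv by auto

lemma int_f: "integrable M (\<lambda>x. exp (a * (X 1 x - q)))"
proof -
  have e: "(\<lambda>x. exp (- a * q) * exp (a * X 1 x)) = (\<lambda>x. exp (a * (X 1 x - q)))"
    by (auto simp: fun_eq_iff mult_exp_exp algebra_simps)
  show ?thesis by (subst e[symmetric]) (rule integrable_mult_right[OF expint])
qed

lemma int_Xi:
  assumes "i \<ge> 1"
  shows "integrable M (\<lambda>x. exp (a * (X i x - q)))" "(\<integral>x. exp (a * (X i x - q)) \<partial>M) = f a"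
proof -
  have m: "X i \<in> measurable M borel" using rv assms by auto
  have g: "(\<lambda>y. exp (a * (y - q))) \<in> borel_measurable (borel :: real measure)" by measurable
  have "integrable (distr M borel (X 1)) (\<lambda>y. exp (a * (y - q)))"
    using integrable_distr_eq[OF rv1 g] int_f by simp
  then have "integrable (distr M borel (X i)) (\<lambda>y. exp (a * (y - q)))"
    using ident[OF assms] by simp
  then show "integrable M (\<lambda>x. exp (a * (X i x - q)))"
    using integrable_distr_eq[OF m g] by simp
  have "(\<integral>x. exp (a * (X i x - q)) \<partial>M) = (\<integral>y. exp (a * (y - q)) \<partial>distr M borel (X i))"
    using integral_distr[OF m g] by simp
  also have "\<dots> = (\<integral>y. exp (a * (y - q)) \<partial>distr M borel (X 1))" using ident[OF assms] by simp
  also have "\<dots> = f a" unfolding f_def using integral_distr[OF rv1 g] by simp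
  finally show "(\<integral>x. exp (a * (X i x - q)) \<partial>M) = f a" .
qed

lemma mgf_sum:
  assumes "finite I" "I \<subseteq> {1..}"
  shows "integrable M (\<lambda>x. exp (t * (\<Sum>i\<in>I. (X i x - q))))"
    "(\<integral>x. exp (t * (\<Sum>i\<in>I. (X i x - q))) \<partial>M) = f t ^ card I"
proof -
  have eq: "(\<lambda>x. exp (t * (\<Sum>i\<in>I. (X i x - q)))) = (\<lambda>x. \<Prod>i\<in>I. exp (t * (X i x - q)))"
    using assms(1) by (auto simp: fun_eq_iff sum_distrib_left exp_sum)
  have ind: "indep_vars (\<lambda>_. borel) (\<lambda>i x. exp (t * (X i x - q))) I"
    by (rule indep_vars_compose2[where X=X and M'="\<lambda>_. borel"])
       (auto intro: indep_vars_subset[OF indep assms(2)])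
  have int: "\<And>i. i \<in> I \<Longrightarrow> integrable M (\<lambda>x. exp (t * (X i x - q)))"
    using int_Xi assms(2) by auto
  show "integrable M (\<lambda>x. exp (t * (\<Sum>i\<in>I. (X i x - q))))"
    unfolding eq by (rule indep_vars_integrable[OF assms(1) ind int])
  show "(\<integral>x. exp (t * (\<Sum>i\<in>I. (X i x - q))) \<partial>M) = f t ^ card I"
    unfolding eq using indep_vars_lebesgue_integral[OF assms(1) ind int] int_Xi assms(2)
    by (auto simp: subset_iff)
qed

lemma intX: "integrable M (X 1)"
proof (rule Bochner_Integration.integrable_bound)
  show "integrable M (\<lambda>x. exp (1 * X 1 x) + exp ((-1) * X 1 x))"
    by (rule Bochner_Integration.integrable_add[OF expint expint])
  show "AE x in M. norm (X 1 x) \<le> norm (exp (1 * X 1 x) + exp ((-1) * X 1 x))"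
  proof (intro AE_I2)
    fix x
    have "abs (X 1 x) \<le> exp (X 1 x) + exp (- X 1 x)"
      using exp_ge_add_one_self[of "X 1 x"] exp_ge_add_one_self[of "- X 1 x"]
      by (smt (verit) exp_gt_zero)
    then show "norm (X 1 x) \<le> norm (exp (1 * X 1 x) + exp ((-1) * X 1 x))"
      by (simp add: add_pos_pos)
  qed
qed (use rv1 in simp)

lemma f_jensen: "f a \<ge> 1 - a * q"
proof -
  have "(\<integral>x. 1 + a * (X 1 x - q) \<partial>M) \<le> f a"
    unfolding f_def
  proof (rule integral_mono)
    show "integrable M (\<lambda>x. 1 + a * (X 1 x - q))"
      by (intro Bochner_Integration.integrable_add integrable_mult_right Bochner_Integration.integrable_diff intX) auto
  qed (auto intro!: int_f[simplified] exp_ge_add_one_self)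
  moreover have "(\<integral>x. 1 + a * (X 1 x - q) \<partial>M) = 1 - a * q"
    using intX mean0 by (simp add: algebra_simps prob_space)
  ultimately show ?thesis by simp
qed

end

context LDsetup
begin

lemma f0: "f 0 = 1" unfolding f_def by (simp add: prob_space)

lemma f_lower:
  assumes "a \<le> 0" "q' \<le> q"
  shows "f a \<ge> exp (a * (q' - q)) * measure M {x \<in> space M. X 1 x < q'}"
proof -
  have "(\<integral>x. exp (a * (q' - q)) * indicator {x \<in> space M. X 1 x < q'} x \<partial>M) \<le> f a"
    unfolding f_def
  proof (rule integral_mono)
    show "integrable M (\<lambda>x. exp (a * (q' - q)) * indicator {x \<in> space M. X 1 x < q'} x)"
      by (intro integrable_mult_right integrable_real_indicator) (auto simp: emeasure_eq_measure)
    fix x assume "x \<in> space M"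
    show "exp (a * (q' - q)) * indicator {x \<in> space M. X 1 x < q'} x \<le> exp (a * (X 1 x - q))"
    proof (cases "X 1 x < q'")
      case True
      then have "a * (q' - q) \<le> a * (X 1 x - q)" using assms by (intro mult_left_mono_neg) auto
      then show ?thesis using True \<open>x \<in> space M\<close> by (simp add: indicator_def)
    qed (simp add: indicator_def)
  qed (rule int_f)
  then show ?thesis by (simp add: measure_def)
qed

lemma f_pos: "f a > 0"
proof (cases "a \<le> 0")
  case True
  have "f a \<ge> exp (a * (q - q)) * measure M {x \<in> space M. X 1 x < q}" by (rule f_lower[OF True]) simp
  then show ?thesis using posq by simp
next
  case False
  then show ?thesis using f_jensen[of a] qneg by (smt (verit) mult_pos_neg)
qed

lemma exists_q':
  "\<exists>q'<q. measure M {x \<in> space M. X 1 x < q'} > 0"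
proof (rule ccontr)
  assume neg: "\<not> ?thesis"
  have z: "measure M {x \<in> space M. X 1 x < q - 1 / real (Suc n)} = 0" for n
  proof -
    have "q - 1 / real (Suc n) < q" by simp
    then have "\<not> measure M {x \<in> space M. X 1 x < q - 1 / real (Suc n)} > 0" using neg by blast
    then show ?thesis using measure_nonneg[of M] by (simp add: not_less order.antisym)
  qed
  define B where "B n = {x \<in> space M. X 1 x < q - 1 / real (Suc n)}" for n
  have inc: "incseq B"
  proof (rule incseq_SucI)
    fix n
    have "1 / real (Suc (Suc n)) \<le> 1 / real (Suc n)" by (intro divide_left_mono) auto
    then show "B n \<subseteq> B (Suc n)" unfolding B_def by auto
  qed
  have sets: "range B \<subseteq> sets M" unfolding B_def by auto
  have U: "(\<Union>n. B n) = {x \<in> space M. X 1 x < q}"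
  proof
    show "(\<Union>n. B n) \<subseteq> {x \<in> space M. X 1 x < q}"
    proof
      fix x assume "x \<in> (\<Union>n. B n)"
      then obtain n where "x \<in> B n" by auto
      then have a: "X 1 x < q - 1/real (Suc n)" "x \<in> space M" by (auto simp: B_def simp del: of_nat_Suc)
      have pos: "0 < 1/real (Suc n)" by (simp del: of_nat_Suc)
      have "X 1 x < q" using a(1) pos by linarith
      then show "x \<in> {x \<in> space M. X 1 x < q}" using a(2) by simp
    qed
    show "{x \<in> space M. X 1 x < q} \<subseteq> (\<Union>n. B n)"
    proof
      fix x assume x: "x \<in> {x \<in> space M. X 1 x < q}"
      then obtain n where "inverse (real (Suc n)) < q - X 1 x"
        using reals_Archimedean[of "q - X 1 x"] by auto
      then show "x \<in> (\<Union>n. B n)" using x unfolding B_def by (auto simp: field_simps)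
    qed
  qed
  have "(\<lambda>n. measure M (B n)) \<longlonglongrightarrow> measure M (\<Union>n. B n)"
    by (rule finite_Lim_measure_incseq[OF sets inc])
  moreover have "(\<lambda>n. measure M (B n)) = (\<lambda>n. 0)" using z unfolding B_def by auto
  ultimately have "measure M (\<Union>n. B n) = 0" using LIMSEQ_const_iff by metis
  then show False using posq U by simp
qed

lemma f_convex: "convex_on UNIV f"
proof (rule convex_onI)
  fix t a b :: real assume t: "0 < t" "t < 1"
  have "f ((1 - t) *\<^sub>R a + t *\<^sub>R b) \<le> (\<integral>x. (1 - t) * exp (a * (X 1 x - q)) + t * exp (b * (X 1 x - q)) \<partial>M)"
    unfolding f_def
  proof (rule integral_mono)
    fix x
    have "exp ((1 - t) *\<^sub>R (a * (X 1 x - q)) + t *\<^sub>R (b * (X 1 x - q))) \<le> (1 - t) * exp (a * (X 1 x - q)) + t * exp (b * (X 1 x - q))"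
      using convex_onD[OF exp_convex, of t] t by auto
    then show "exp (((1 - t) *\<^sub>R a + t *\<^sub>R b) * (X 1 x - q)) \<le> (1 - t) * exp (a * (X 1 x - q)) + t * exp (b * (X 1 x - q))"
      by (simp add: algebra_simps)
  qed (auto intro!: int_f Bochner_Integration.integrable_add integrable_mult_right)
  also have "\<dots> = (1 - t) * f a + t * f b"
    unfolding f_def by (subst Bochner_Integration.integral_add) (auto intro!: int_f integrable_mult_right)
  finally show "f ((1 - t) *\<^sub>R a + t *\<^sub>R b) \<le> (1 - t) * f a + t * f b" .
qed simp

lemma f_cont: "continuous_on UNIV f"
  by (rule convex_on_continuous[OF open_UNIV f_convex])

lemma f_quad:
  assumes "R \<ge> 0"
  shows "\<exists>K\<ge>0. \<forall>a h. \<bar>a\<bar> \<le> R \<longrightarrow> \<bar>h\<bar> \<le> 1 \<longrightarrow> f (a+h) + f (a-h) - 2 * f a \<le> K * h\<^sup>2"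
proof (intro exI[of _ "4 * (f (R+2) + f (-(R+2)))"] conjI allI impI)
  show "0 \<le> 4 * (f (R + 2) + f (- (R + 2)))" using f_pos[of "R+2"] f_pos[of "-(R+2)"] by simp
  fix a h :: real assume ah: "\<bar>a\<bar> \<le> R" "\<bar>h\<bar> \<le> 1"
  define g where "g b x = exp (b * (X 1 x - q))" for b x
  have ig: "\<And>b. integrable M (g b)" unfolding g_def by (rule int_f)
  have fg: "\<And>b. f b = (\<integral>x. g b x \<partial>M)" unfolding f_def g_def by simp
  have "f (a+h) + f (a-h) - 2 * f a = (\<integral>x. g (a+h) x + g (a-h) x - 2 * g a x \<partial>M)"
    using ig unfolding fg by (simp add: Bochner_Integration.integral_diff Bochner_Integration.integral_add)
  also have "\<dots> \<le> (\<integral>x. h\<^sup>2 * (4 * (g (R+2) x + g (-(R+2)) x)) \<partial>M)"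
  proof (rule integral_mono)
    show "integrable M (\<lambda>x. g (a+h) x + g (a-h) x - 2 * g a x)" using ig by auto
    show "integrable M (\<lambda>x. h\<^sup>2 * (4 * (g (R+2) x + g (-(R+2)) x)))" using ig by auto
    fix x show "g (a+h) x + g (a-h) x - 2 * g a x \<le> h\<^sup>2 * (4 * (g (R+2) x + g (-(R+2)) x))"
      unfolding g_def using second_diff_pw[OF ah, of "R+2" "X 1 x - q"] by simp
  qed
  also have "\<dots> = 4 * (f (R+2) + f (-(R+2))) * h\<^sup>2"
    using ig unfolding fg by (simp add: Bochner_Integration.integral_add algebra_simps)
  finally show "f (a+h) + f (a-h) - 2 * f a \<le> 4 * (f (R+2) + f (-(R+2))) * h\<^sup>2" .
qed

end

lemma three_split:
  fixes \<alpha> h \<eta> m z :: real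
  assumes "\<alpha> \<le> 0" "h > 0"
  shows "exp (\<alpha> * z) \<le> exp (- \<alpha> * \<eta> * m) * (if z \<le> 0 then 1 else 0) + exp ((\<alpha> + h) * z) + exp ((\<alpha> - h) * z) * exp (- h * \<eta> * m)"
proof -
  have p1: "0 \<le> exp (- \<alpha> * \<eta> * m) * (if z \<le> 0 then 1 else 0)" by simp
  have p2: "0 \<le> exp ((\<alpha> + h) * z)" "0 \<le> exp ((\<alpha> - h) * z) * exp (- h * \<eta> * m)" by simp_all
  consider "z > 0" | "z < - \<eta> * m" | "- \<eta> * m \<le> z" "z \<le> 0" by linarith
  then show ?thesis
  proof cases
    case 1
    then have "\<alpha> * z \<le> (\<alpha> + h) * z" using assms by (simp add: algebra_simps)
    then have "exp (\<alpha> * z) \<le> exp ((\<alpha> + h) * z)" by simp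
    then show ?thesis using p1 p2 by linarith
  next
    case 2
    have "h * (z + \<eta> * m) \<le> 0" using 2 assms by (intro mult_nonneg_nonpos) auto
    moreover have "(\<alpha> - h) * z + (- h * \<eta> * m) = \<alpha> * z - h * (z + \<eta> * m)" by (simp add: algebra_simps)
    ultimately have "\<alpha> * z \<le> (\<alpha> - h) * z + (- h * \<eta> * m)" by linarith
    then have "exp (\<alpha> * z) \<le> exp ((\<alpha> - h) * z) * exp (- h * \<eta> * m)" by (simp add: exp_add[symmetric])
    then show ?thesis using p1 p2 by linarith
  next
    case 3
    have "\<alpha> * z \<le> \<alpha> * (- \<eta> * m)" using 3 assms by (intro mult_left_mono_neg) auto
    then have "\<alpha> * z \<le> - \<alpha> * \<eta> * m" by simp
    then have "exp (\<alpha> * z) \<le> exp (- \<alpha> * \<eta> * m) * (if z \<le> 0 then 1 else 0)" using 3 by simp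
    then show ?thesis using p2 by linarith
  qed
qed

context LDsetup
begin

lemma minimizer:
  "\<exists>a0. a0 \<le> 0 \<and> (\<forall>b. f a0 \<le> f b) \<and> (\<forall>h>0. f a0 < f (a0 - h))"
proof -
  obtain q' where q': "q' < q" "measure M {x \<in> space M. X 1 x < q'} > 0" using exists_q' by auto
  define p where "p = measure M {x \<in> space M. X 1 x < q'}"
  have p: "0 < p" "p \<le> 1" using q' by (auto simp: p_def)
  define R where "R = (1 - ln p) / (q - q')"
  have lnp: "ln p \<le> 0" using p by simp
  have R: "R > 0" unfolding R_def using q' lnp by (intro divide_pos_pos) auto
  have big: "f b > 1" if "b < - R" for b
  proof -
    have "f b \<ge> exp (b * (q' - q)) * p" unfolding p_def using that R q' by (intro f_lower) auto
    moreover have "b * (q' - q) > 1 - ln p"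
    proof -
      have "R * (q - q') = 1 - ln p" unfolding R_def using q' by simp
      moreover have "R * (q - q') < (- b) * (q - q')" using that q' by (intro mult_strict_right_mono) auto
      ultimately show ?thesis by (simp add: algebra_simps)
    qed
    then have "exp (b * (q' - q)) * p > exp (1 - ln p) * p" using p by simp
    moreover have "exp (1 - ln p) * p = exp 1" using p by (simp add: exp_diff)
    moreover have "exp (1::real) > 1" by simp
    ultimately show ?thesis by linarith
  qed
  define S where "S = {-R..0::real}"
  have cS: "compact S" "S \<noteq> {}" using R by (auto simp: S_def)
  obtain m0 where m0: "m0 \<in> S" "\<And>y. y \<in> S \<Longrightarrow> f m0 \<le> f y"
    using continuous_attains_inf[OF cS continuous_on_subset[OF f_cont]] by auto
  define S' where "S' = S \<inter> {x. f x \<le> f m0}"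
  have cS': "compact S'" unfolding S'_def
    by (intro compact_Int_closed cS closed_Collect_le f_cont continuous_on_const)
  have neS': "S' \<noteq> {}" using m0 by (auto simp: S'_def)
  obtain a0 where a0: "a0 \<in> S'" "\<And>y. y \<in> S' \<Longrightarrow> a0 \<le> y"
    using continuous_attains_inf[OF cS' neS' continuous_on_id] by auto
  have a0S: "a0 \<in> S" and fa0: "f a0 = f m0" using a0 m0 by (auto simp: S'_def intro: order.antisym)
  have fm1: "f m0 \<le> 1" using m0(2)[of 0] f0 R by (simp add: S_def)
  have glob: "f a0 \<le> f b" for b
  proof (cases "b \<in> S")
    case True then show ?thesis using fa0 m0 by simp
  next
    case False
    then consider "b > 0" | "b < - R" by (auto simp: S_def not_le)
    then show ?thesis
    proof cases
      case 1 then have "f b \<ge> 1" using f_jensen[of b] qneg by (smt (verit) mult_pos_neg)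
      then show ?thesis using fa0 fm1 by simp
    next
      case 2 then show ?thesis using big fa0 fm1 by fastforce
    qed
  qed
  have strict: "f a0 < f (a0 - h)" if "h > 0" for h
  proof (cases "a0 - h \<in> S")
    case True
    show ?thesis
    proof (rule ccontr)
      assume "\<not> ?thesis"
      then have "a0 - h \<in> S'" using True fa0 by (auto simp: S'_def)
      then show False using a0(2)[of "a0 - h"] that by simp
    qed
  next
    case False
    then have "a0 - h < - R" using a0S that by (auto simp: S_def)
    then show ?thesis using big fa0 fm1 by fastforce
  qed
  show ?thesis using a0S glob strict by (intro exI[of _ a0]) (auto simp: S_def)
qed

lemma sigma_eq:
  assumes "\<And>b. f a0 \<le> f b"
  shows "cramer_rate M (X 1) q = ereal (- ln (f a0))"
proof -
  have e: "\<alpha> * q - ln (\<integral>x. exp (\<alpha> * X 1 x) \<partial>M) = - ln (f \<alpha>)" for \<alpha>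
  proof -
    have "f \<alpha> = (\<integral>x. exp (- \<alpha> * q) * exp (\<alpha> * X 1 x) \<partial>M)"
      unfolding f_def by (intro Bochner_Integration.integral_cong) (auto simp: exp_add[symmetric] algebra_simps)
    also have "\<dots> = exp (- \<alpha> * q) * (\<integral>x. exp (\<alpha> * X 1 x) \<partial>M)" by simp
    finally have "(\<integral>x. exp (\<alpha> * X 1 x) \<partial>M) = exp (\<alpha> * q) * f \<alpha>"
      by (simp add: exp_minus field_simps)
    then show ?thesis using f_pos[of \<alpha>] by (simp add: ln_mult)
  qed
  show ?thesis unfolding cramer_rate_def e
  proof (rule SUP_eqI)
    fix b :: real
    show "ereal (- ln (f b)) \<le> ereal (- ln (f a0))" using assms[of b] f_pos[of a0] by simp
  next
    fix y assume "\<And>i. i \<in> UNIV \<Longrightarrow> ereal (- ln (f i)) \<le> y"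
    then show "ereal (- ln (f a0)) \<le> y" by simp
  qed
qed

end

context LDsetup
begin

lemma LD_lower:
  assumes a0: "a0 \<le> 0" "\<And>b. f a0 \<le> f b" "\<And>h. h > 0 \<Longrightarrow> f a0 < f (a0 - h)" and \<delta>: "\<delta> > 0"
  shows "\<exists>m0. \<forall>I. finite I \<longrightarrow> I \<subseteq> {1..} \<longrightarrow> card I \<ge> m0 \<longrightarrow>
     (f a0 * exp (- \<delta>)) ^ card I / 2 \<le> prob {x \<in> space M. (\<Sum>i\<in>I. X i x) \<le> q * real (card I)}"
proof -
  define R0 where "R0 = - a0"
  have R0: "R0 \<ge> 0" using a0 by (simp add: R0_def)
  obtain K where K: "K \<ge> 0" "\<And>a h. \<bar>a\<bar> \<le> R0+1 \<Longrightarrow> \<bar>h\<bar> \<le> 1 \<Longrightarrow> f (a+h) + f (a-h) - 2 * f a \<le> K * h\<^sup>2"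
    using f_quad[of "R0+1"] R0 by auto
  define ms where "ms = f a0"
  have ms: "ms > 0" using f_pos by (simp add: ms_def)
  define \<eta> where "\<eta> = \<delta> / (R0+1)"
  have \<eta>: "\<eta> > 0" using \<delta> R0 by (simp add: \<eta>_def)
  define h where "h = min 1 (ms * \<eta> / (4*K+1))"
  have h: "h > 0" "h \<le> 1" "h \<le> ms * \<eta> / (4*K+1)" using ms \<eta> K by (auto simp: h_def)
  define \<alpha> where "\<alpha> = a0 - h"
  have \<alpha>: "\<alpha> \<le> 0" "\<alpha> + h = a0" using a0 h by (auto simp: \<alpha>_def)
  define A where "A = f \<alpha>"
  define B where "B = f a0"
  define C where "C = f (\<alpha> - h) * exp (- h * \<eta>)"
  have BA: "B < A" unfolding A_def B_def \<alpha>_def using a0(3)[OF h(1)] .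
  have Bpos: "B > 0" and Cpos: "C > 0" and Apos: "A > 0" using f_pos by (auto simp: B_def C_def A_def)
  have q1: "f (a0 - h) - f a0 \<le> K * h\<^sup>2"
    using K(2)[of a0 h] a0(2)[of "a0+h"] h R0 by (simp add: R0_def)
  have q2: "f a0 + f (\<alpha> - h) - 2 * f \<alpha> \<le> K * h\<^sup>2"
    using K(2)[of \<alpha> h] h \<alpha> R0 by (simp add: R0_def \<alpha>_def)
  have q3: "f (\<alpha> - h) \<le> A + 2 * K * h\<^sup>2" using q1 q2 by (simp add: A_def \<alpha>_def)
  have "2 * K * h \<le> 2 * K * (ms * \<eta> / (4*K+1))" using h K by (intro mult_left_mono) auto
  also have "\<dots> < ms * \<eta>"
  proof -
    have "2 * K * (ms * \<eta> / (4*K+1)) = (ms * \<eta>) * (2*K / (4*K+1))" by simp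
    also have "\<dots> < (ms * \<eta>) * 1" using ms \<eta> K by (intro mult_strict_left_mono) auto
    finally show ?thesis by simp
  qed
  also have "ms * \<eta> \<le> A * \<eta>" using a0(2)[of \<alpha>] \<eta> by (simp add: ms_def A_def)
  finally have "2 * K * h < A * \<eta>" .
  then have "2 * K * h\<^sup>2 < A * h * \<eta>" using h(1)
    by (simp add: power2_eq_square)
  then have "f (\<alpha> - h) < A * (1 + h * \<eta>)" using q3 by (simp add: algebra_simps)
  also have "\<dots> \<le> A * exp (h * \<eta>)" using Apos by (intro mult_left_mono) (auto simp: exp_ge_add_one_self add.commute)
  finally have "f (\<alpha> - h) * exp (- h * \<eta>) < A * exp (h * \<eta>) * exp (- h * \<eta>)" by simp
  then have CA: "C < A" by (simp add: C_def mult.assoc exp_add[symmetric])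
  have "(\<lambda>n. (B/A)^n) \<longlonglongrightarrow> 0" using BA Bpos Apos by (intro LIMSEQ_power_zero) simp
  then have "eventually (\<lambda>n. (B/A)^n < 1/4) sequentially" by (rule order_tendstoD) simp
  then obtain N1 where N1: "\<And>n. n \<ge> N1 \<Longrightarrow> (B/A)^n < 1/4" by (auto simp: eventually_sequentially)
  have "(\<lambda>n. (C/A)^n) \<longlonglongrightarrow> 0" using CA Cpos Apos by (intro LIMSEQ_power_zero) simp
  then have "eventually (\<lambda>n. (C/A)^n < 1/4) sequentially" by (rule order_tendstoD) simp
  then obtain N2 where N2: "\<And>n. n \<ge> N2 \<Longrightarrow> (C/A)^n < 1/4" by (auto simp: eventually_sequentially)
  show ?thesis
  proof (intro exI[of _ "max N1 N2"] allI impI)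
    fix I :: "nat set" assume I: "finite I" "I \<subseteq> {1..}" "max N1 N2 \<le> card I"
    define m where "m = card I"
    define Z where "Z x = (\<Sum>i\<in>I. (X i x - q))" for x
    have iZ: "integrable M (\<lambda>x. exp (t * Z x))" for t unfolding Z_def by (rule mgf_sum(1)[OF I(1,2)])
    have eZ: "(\<integral>x. exp (t * Z x) \<partial>M) = f t ^ m" for t unfolding Z_def m_def by (rule mgf_sum(2)[OF I(1,2)])
    define S where "S = {x \<in> space M. Z x \<le> 0}"
    have Ssets: "S \<in> sets M"
    proof -
      have "\<And>i. i \<in> I \<Longrightarrow> X i \<in> borel_measurable M" using I(2) rv by auto
      then have "Z \<in> borel_measurable M" unfolding Z_def by (intro borel_measurable_sum borel_measurable_diff) auto
      then show ?thesis unfolding S_def by measurable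
    qed
    have Seq: "{x \<in> space M. (\<Sum>i\<in>I. X i x) \<le> q * real (card I)} = S"
      unfolding S_def Z_def m_def by (auto simp: sum_subtractf algebra_simps)
    define mr where "mr = real m"
    have "A ^ m = (\<integral>x. exp (\<alpha> * Z x) \<partial>M)" using eZ by (simp add: A_def)
    also have "\<dots> \<le> (\<integral>x. exp (- \<alpha> * \<eta> * mr) * indicator S x + exp ((\<alpha> + h) * Z x) + exp ((\<alpha> - h) * Z x) * exp (- h * \<eta> * mr) \<partial>M)"
    proof (rule integral_mono)
      show "integrable M (\<lambda>x. exp (\<alpha> * Z x))" by (rule iZ)
      show "integrable M (\<lambda>x. exp (- \<alpha> * \<eta> * mr) * indicator S x + exp ((\<alpha> + h) * Z x) + exp ((\<alpha> - h) * Z x) * exp (- h * \<eta> * mr))"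
        using Ssets by (intro Bochner_Integration.integrable_add integrable_mult_left integrable_mult_right integrable_real_indicator iZ)
          (auto simp: emeasure_eq_measure)
      fix x assume "x \<in> space M"
      then have "indicator S x = (if Z x \<le> 0 then 1 else (0::real))" by (simp add: S_def indicator_def)
      then show "exp (\<alpha> * Z x) \<le> exp (- \<alpha> * \<eta> * mr) * indicator S x + exp ((\<alpha> + h) * Z x) + exp ((\<alpha> - h) * Z x) * exp (- h * \<eta> * mr)"
        using three_split[OF \<alpha>(1) h(1), of "Z x" \<eta> mr] by simp
    qed
    also have "\<dots> = exp (- \<alpha> * \<eta> * mr) * prob S + B ^ m + f (\<alpha> - h) ^ m * exp (- h * \<eta> * mr)"
      using Ssets iZ eZ \<alpha>(2)
      by (simp add: Bochner_Integration.integral_add integrable_real_indicator emeasure_eq_measure B_def)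
    also have "f (\<alpha> - h) ^ m * exp (- h * \<eta> * mr) = C ^ m"
      unfolding C_def mr_def by (simp add: power_mult_distrib exp_of_nat_mult[symmetric] algebra_simps)
    finally have main: "A ^ m \<le> exp (- \<alpha> * \<eta> * mr) * prob S + B ^ m + C ^ m" .
    have "B ^ m = A ^ m * (B/A)^m" using Apos by (simp add: power_divide)
    also have "\<dots> \<le> A ^ m * (1/4)" using N1[of m] I(3) Apos by (intro mult_left_mono) (auto simp: m_def)
    finally have Bm: "B ^ m \<le> A ^ m / 4" by simp
    have "C ^ m = A ^ m * (C/A)^m" using Apos by (simp add: power_divide)
    also have "\<dots> \<le> A ^ m * (1/4)" using N2[of m] I(3) Apos by (intro mult_left_mono) (auto simp: m_def)
    finally have Cm: "C ^ m \<le> A ^ m / 4" by simp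
    have "A ^ m / 2 \<le> exp (- \<alpha> * \<eta> * mr) * prob S" using main Bm Cm by simp
    then have "exp (\<alpha> * \<eta> * mr) * (A ^ m / 2) \<le> exp (\<alpha> * \<eta> * mr) * (exp (- \<alpha> * \<eta> * mr) * prob S)"
      by (intro mult_left_mono) auto
    also have "\<dots> = prob S" by (simp add: mult.assoc[symmetric] exp_add[symmetric])
    also have "exp (\<alpha> * \<eta> * mr) * (A ^ m / 2) = (exp (\<alpha> * \<eta>) * A) ^ m / 2"
      unfolding mr_def by (simp add: power_mult_distrib exp_of_nat_mult[symmetric] algebra_simps)
    finally have P: "(exp (\<alpha> * \<eta>) * A) ^ m / 2 \<le> prob S" .
    have "\<alpha> * \<eta> \<ge> - \<delta>"
    proof -
      have "\<alpha> \<ge> - (R0 + 1)" using h by (simp add: \<alpha>_def R0_def)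
      then have "\<alpha> * \<eta> \<ge> - (R0 + 1) * \<eta>" using \<eta> by (intro mult_right_mono) auto
      also have "- (R0 + 1) * \<eta> = - \<delta>" using R0 by (simp add: \<eta>_def field_simps)
      finally show ?thesis .
    qed
    then have "f a0 * exp (- \<delta>) \<le> exp (\<alpha> * \<eta>) * A"
      using a0(2)[of \<alpha>] f_pos[of a0] by (subst mult.commute, intro mult_mono) (auto simp: A_def)
    then have "(f a0 * exp (- \<delta>)) ^ m \<le> (exp (\<alpha> * \<eta>) * A) ^ m"
      using f_pos[of a0] by (intro power_mono) auto
    then show "(f a0 * exp (- \<delta>)) ^ card I / 2 \<le> prob {x \<in> space M. (\<Sum>i\<in>I. X i x) \<le> q * real (card I)}"
      using P Seq by (simp add: m_def)
  qed
qed

end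

lemma enat_Inf_mem: "(S :: enat set) \<noteq> {} \<Longrightarrow> Inf S \<in> S"
  unfolding Inf_enat_def by (auto intro: LeastI)

lemma tau_enat:
  assumes "tau w k q = enat t"
  shows "t > 0"
proof -
  define S where "S = {enat n | n. even n \<and> n > 0 \<and>
     (\<exists>k'. even k' \<and> k' > 0 \<and> k' \<ge> k \<and> k' \<le> n \<and> (1 / real k') * (\<Sum>i\<in>{n - k' + 1..n}. w i) \<le> q)}"
  have t: "Inf S = enat t" using assms unfolding tau_def S_def by simp
  then have "S \<noteq> {}" by (auto simp: Inf_enat_def)
  then have "Inf S \<in> S" by (rule enat_Inf_mem)
  then show ?thesis using t by (auto simp: S_def)
qed

lemma tau_le:
  assumes "even n" "n > 0" "even k" "k > 0" "k \<ge> Mk" "k \<le> n" "(1 / real k) * (\<Sum>i\<in>{n - k + 1..n}. w i) \<le> q"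
  shows "\<exists>t. tau w Mk q = enat t \<and> t \<le> n"
proof -
  define S where "S = {enat n | n. even n \<and> n > 0 \<and>
     (\<exists>k'. even k' \<and> k' > 0 \<and> k' \<ge> Mk \<and> k' \<le> n \<and> (1 / real k') * (\<Sum>i\<in>{n - k' + 1..n}. w i) \<le> q)}"
  have inS: "enat n \<in> S" unfolding S_def using assms by blast
  then have le: "Inf S \<le> enat n" by (rule Inf_lower)
  have "Inf S \<in> S" using inS enat_Inf_mem by blast
  then obtain t where "Inf S = enat t" by (auto simp: S_def)
  with le show ?thesis unfolding tau_def S_def[symmetric] by auto
qed

lemma T_bound:
  fixes s :: real
  assumes "s + eps > 0" "even k" "k > 0" "k \<ge> A" "tau w k q = enat t" "real t \<le> exp (real k * (s + eps))"
  shows "ennreal_of_enat (T_time w (ereal s) A eps q) \<le> ennreal (exp (real k * (s + eps)))"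
proof -
  have tpos: "t > 0" using tau_enat[OF assms(5)] .
  have "ln (real t) \<le> real k * (s + eps)" using assms(6) tpos by (metis ln_exp ln_le_cancel_iff of_nat_0_less_iff exp_gt_zero)
  then have "ln (real t) / real k \<le> s + eps" using assms(3) by (simp add: divide_le_eq mult.commute)
  then have c: "ereal (ln (real t) / real k) \<le> ereal s + ereal eps" by simp
  define E where "E = {enat k | k. even k \<and> k > 0 \<and> k \<ge> A \<and>
     (\<exists>t. tau w k q = enat t \<and> ereal (ln (real t) / real k) \<le> ereal s + ereal eps)}"
  have inE: "enat k \<in> E" unfolding E_def using assms c by blast
  then have le: "Inf E \<le> enat k" by (rule Inf_lower)
  have "Inf E \<in> E" using inE enat_Inf_mem by blast
  then obtain k' t' where k': "Inf E = enat k'" "k' > 0" "tau w k' q = enat t'" "ereal (ln (real t') / real k') \<le> ereal s + ereal eps"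
    unfolding E_def by blast
  have kk: "k' \<le> k" using le k' by simp
  have t'pos: "t' > 0" using tau_enat[OF k'(3)] .
  have "ln (real t') / real k' \<le> s + eps" using k'(4) by simp
  then have "ln (real t') \<le> real k' * (s + eps)" using k'(2) by (simp add: divide_le_eq mult.commute)
  also have "\<dots> \<le> real k * (s + eps)" using kk assms(1) by (intro mult_right_mono) auto
  finally have "real t' \<le> exp (real k * (s + eps))" using t'pos by (metis exp_le_cancel_iff exp_ln of_nat_0_less_iff)
  moreover have "T_time w (ereal s) A eps q = enat t'"
    unfolding T_time_def ell_def E_def[symmetric] using k' by simp
  ultimately show ?thesis by (simp add: ennreal_of_nat_eq_real_of_nat ennreal_leI)
qed

definition blk :: "nat \<Rightarrow> nat \<Rightarrow> nat set" where
  "blk k j = {(j - 1) * k + 1 .. j * k}"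

lemma blk_sub: "blk k j \<subseteq> {1..}" by (auto simp: blk_def)

lemma blk_fin: "finite (blk k j)" by (simp add: blk_def)

lemma blk_card: assumes "j \<ge> 1" shows "card (blk k j) = k"
proof -
  have "j * k = (j - 1) * k + k" using assms by (cases j) auto
  then show ?thesis by (simp add: blk_def)
qed

lemma blk_window: assumes "j \<ge> 1" shows "{j * k - k + 1 .. j * k} = blk k j"
proof -
  have "j * k - k = (j - 1) * k" by (simp add: diff_mult_distrib)
  then show ?thesis by (simp add: blk_def)
qed

lemma blk_disj: "disjoint_family_on (blk k) A"
  unfolding disjoint_family_on_def
proof (intro ballI impI)
  fix a b :: nat assume "a \<noteq> b"
  show "blk k a \<inter> blk k b = {}"
  proof (rule ccontr)
    assume "blk k a \<inter> blk k b \<noteq> {}"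
    then obtain i where "i \<in> blk k a" "i \<in> blk k b" by blast
    then have i: "(a - 1) * k < i" "i \<le> a * k" "(b - 1) * k < i" "i \<le> b * k"
      unfolding blk_def by auto
    have "a < b \<or> b < a" using \<open>a \<noteq> b\<close> by auto
    then show False
    proof
      assume "a < b" then have "a \<le> b - 1" by simp
      then have "a * k \<le> (b - 1) * k" by (rule mult_le_mono1)
      then show False using i by linarith
    next
      assume "b < a" then have "b \<le> a - 1" by simp
      then have "b * k \<le> (a - 1) * k" by (rule mult_le_mono1)
      then show False using i by linarith
    qed
  qed
qed

context LDsetup
begin

lemma Ymeas: "(\<lambda>x. \<Sum>i\<in>blk k j. X i x) \<in> borel_measurable M"
  using rv blk_sub by (intro borel_measurable_sum) auto

lemma bad_sets: "{x \<in> space M. \<not> (\<exists>j\<in>{1..J}. (\<Sum>i\<in>blk k j. X i x) \<le> c)} \<in> sets M"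
proof -
  define Y where "Y j x = (\<Sum>i\<in>blk k j. X i x)" for j x
  have [measurable]: "Y j \<in> borel_measurable M" for j unfolding Y_def by (rule Ymeas)
  have "{x \<in> space M. \<not> (\<exists>j\<in>{1..J}. Y j x \<le> c)} \<in> sets M" by measurable
  then show ?thesis by (simp add: Y_def)
qed

lemma bad_prob:
  assumes p: "0 \<le> p" "p \<le> 1" and pj: "\<And>j. j \<in> {1..J} \<Longrightarrow> p \<le> prob {x \<in> space M. (\<Sum>i\<in>blk k j. X i x) \<le> c}"
  shows "prob {x \<in> space M. \<not> (\<exists>j\<in>{1..J}. (\<Sum>i\<in>blk k j. X i x) \<le> c)} \<le> (1 - p) ^ J"
proof (cases "J = 0")
  case True
  then show ?thesis by (simp add: prob_space)
next
  case False
  define Y where "Y j x = (\<Sum>i\<in>blk k j. X i x)" for j x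
  have Ym: "Y j \<in> borel_measurable M" for j unfolding Y_def by (rule Ymeas)
  have ind0: "indep_vars (\<lambda>j. PiM (blk k j) (\<lambda>_. borel)) (\<lambda>j \<omega>. restrict (\<lambda>i. X i \<omega>) (blk k j)) {1..J}"
    by (rule indep_vars_restrict[OF indep blk_sub blk_disj])
  have ind1: "indep_vars (\<lambda>_. borel) (\<lambda>j \<omega>. (\<lambda>g. \<Sum>i\<in>blk k j. g i) (restrict (\<lambda>i. X i \<omega>) (blk k j))) {1..J}"
    by (rule indep_vars_compose2[OF ind0]) measurable
  have ind: "indep_vars (\<lambda>_. borel) Y {1..J}"
    using ind1 by (rule indep_vars_cong[THEN iffD1, rotated -1]) (auto simp: Y_def fun_eq_iff)
  have eq: "{x \<in> space M. \<not> (\<exists>j\<in>{1..J}. (\<Sum>i\<in>blk k j. X i x) \<le> c)} = (\<Inter>j\<in>{1..J}. Y j -` {c<..} \<inter> space M)"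
    using False by (auto simp: Y_def not_le)
  have "prob (\<Inter>j\<in>{1..J}. Y j -` {c<..} \<inter> space M) = (\<Prod>j\<in>{1..J}. prob (Y j -` {c<..} \<inter> space M))"
    by (rule indep_varsD[OF ind]) (use False in auto)
  also have "\<dots> \<le> (\<Prod>j\<in>{1..J}. (1 - p))"
  proof (rule prod_mono)
    fix j assume j: "j \<in> {1..J}"
    have "Y j -` {c<..} \<inter> space M = space M - {x \<in> space M. Y j x \<le> c}" by auto
    then have "prob (Y j -` {c<..} \<inter> space M) = 1 - prob {x \<in> space M. Y j x \<le> c}"
      using Ym by (simp add: prob_compl)
    then show "0 \<le> prob (Y j -` {c<..} \<inter> space M) \<and> prob (Y j -` {c<..} \<inter> space M) \<le> 1 - p"
      using pj[OF j] by (simp add: Y_def)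
  qed
  also have "\<dots> = (1 - p) ^ J" by simp
  finally show ?thesis using eq by simp
qed

end

lemma exp_cube: assumes "x \<ge> 0" shows "(x/3)^3 \<le> exp (x::real)"
proof -
  have "x/3 \<le> exp (x/3)" using exp_ge_add_one_self[of "x/3"] by linarith
  then have "(x/3)^3 \<le> (exp (x/3))^3" using assms by (intro power_mono) auto
  also have "(exp (x/3))^3 = exp x" by (simp add: exp_of_nat_mult[symmetric])
  finally show ?thesis .
qed

lemma asy_bound:
  fixes e sg :: real
  assumes "e > 0" "sg \<ge> 0"
  shows "\<exists>N. \<forall>k\<ge>N. (k + 2) * sg + 1/2 - exp (k * e) / (2 * k) \<le> - k"
proof (intro exI[of _ "max 1 (54 * (3 * sg + 2) / e^3)"] allI impI)
  fix k :: real assume k: "max 1 (54 * (3 * sg + 2) / e^3) \<le> k"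
  have k1: "k \<ge> 1" and k2: "54 * (3 * sg + 2) / e^3 \<le> k" using k by auto
  have e3: "e^3 > 0" using assms by simp
  have "(k * e / 3)^3 \<le> exp (k * e)" using k1 assms by (intro exp_cube) auto
  then have "(k * e / 3)^3 / (2 * k) \<le> exp (k * e) / (2 * k)" using k1 by (intro divide_right_mono) auto
  moreover have "(k * e / 3)^3 / (2 * k) = k * (k * e^3 / 54)" using k1 by (simp add: power3_eq_cube field_simps)
  moreover have "k * e^3 / 54 \<ge> 3 * sg + 2" using k2 e3 by (simp add: field_simps)
  then have "k * (k * e^3 / 54) \<ge> k * (3 * sg + 2)" using k1 by (intro mult_left_mono) auto
  moreover have "k * (3 * sg + 2) \<ge> (k + 2) * sg + 1/2 + k"
  proof -
    have "2 * sg \<le> 2 * k * sg" using k1 assms(2) by (simp add: mult_right_mono)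
    then show ?thesis using k1 by (simp add: algebra_simps)
  qed
  ultimately show "(k + 2) * sg + 1/2 - exp (k * e) / (2 * k) \<le> - k" by linarith
qed

lemma nat_floor_bounds:
  fixes y :: real assumes "y \<ge> 0"
  shows "real (nat \<lfloor>y\<rfloor>) \<le> y" "real (nat \<lfloor>y\<rfloor>) \<ge> y - 1"
  using assms by (auto simp: of_nat_nat)

context LDsetup
begin

theorem final:
  assumes A: "even A" "A > 0" and eps: "eps > 0"
  shows "(\<integral>\<^sup>+x. ennreal_of_enat (T_time (\<lambda>i. X i x) (cramer_rate M (X 1) q) A eps q) \<partial>M) < \<infinity>"
proof -
  obtain a0 where a0: "a0 \<le> 0" "\<And>b. f a0 \<le> f b" "\<And>h. h > 0 \<Longrightarrow> f a0 < f (a0 - h)"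
    using minimizer by blast
  define s where "s = - ln (f a0)"
  have Sig: "cramer_rate M (X 1) q = ereal s" using sigma_eq[OF a0(2)] by (simp add: s_def)
  have fa0: "f a0 = exp (- s)" using f_pos[of a0] by (simp add: s_def)
  have s0: "s \<ge> 0" using a0(2)[of 0] f0 f_pos[of a0] by (simp add: s_def)
  define sg where "sg = s + eps"
  have sg: "sg > 0" using s0 eps by (simp add: sg_def)
  define \<delta> where "\<delta> = eps / 2"
  have \<delta>: "\<delta> > 0" using eps by (simp add: \<delta>_def)
  obtain m0 where m0: "\<And>I. finite I \<Longrightarrow> I \<subseteq> {1..} \<Longrightarrow> card I \<ge> m0 \<Longrightarrow>
     (f a0 * exp (- \<delta>)) ^ card I / 2 \<le> prob {x \<in> space M. (\<Sum>i\<in>I. X i x) \<le> q * real (card I)}"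
    using LD_lower[OF a0 \<delta>] by blast
  define r where "r = f a0 * exp (- \<delta>)"
  have r1: "r = exp (- (s + \<delta>))" unfolding r_def fa0 by (simp only: exp_add[symmetric] minus_add_distrib)
  have r: "r = exp (- (s + \<delta>))" "r > 0" "r \<le> 1" using r1 s0 \<delta> by auto
  define J where "J k = nat \<lfloor>exp (real k * sg) / real k\<rfloor>" for k :: nat
  define good where "good k x \<longleftrightarrow> (\<exists>j\<in>{1..J k}. (\<Sum>i\<in>blk k j. X i x) \<le> q * real k)" for k x
  define Bad where "Bad k = {x \<in> space M. \<not> good k x}" for k
  define E where "E j = (case j of 0 \<Rightarrow> space M | Suc j' \<Rightarrow> Bad (A + 2 * j'))" for j
  define c where "c j = exp (real (A + 2 * j) * sg)" for j
  define g where "g x = (\<Sum>j. ennreal (c j) * indicator (E j) x)" for x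
  have Bad_sets: "Bad k \<in> sets M" for k unfolding Bad_def good_def by (rule bad_sets)
  have E_sets: "E j \<in> sets M" for j by (cases j) (auto simp: E_def Bad_sets)
  have c1: "c j \<ge> 1" for j using sg by (simp add: c_def)
  have c0: "c j \<ge> 0" for j using c1[of j] by linarith
  have good_T: "ennreal_of_enat (T_time (\<lambda>i. X i x) (ereal s) A eps q) \<le> ennreal (exp (real k * sg))"
    if k: "even k" "k > 0" "k \<ge> A" and gd: "good k x" for k x
  proof -
    obtain jj where jj: "jj \<in> {1..J k}" "(\<Sum>i\<in>blk k jj. X i x) \<le> q * real k" using gd by (auto simp: good_def)
    define n where "n = jj * k"
    have n: "even n" "n > 0" "k \<le> n" using k jj by (auto simp: n_def)
    have w: "{n - k + 1..n} = blk k jj" using blk_window[of jj k] jj by (simp add: n_def)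
    have "(1 / real k) * (\<Sum>i\<in>{n - k + 1..n}. X i x) \<le> q"
      using jj(2) k(2) unfolding w by (simp add: divide_le_eq mult.commute)
    then obtain t where t: "tau (\<lambda>i. X i x) k q = enat t" "t \<le> n"
      using tau_le[OF n(1,2) k(1,2) order_refl n(3)] by blast
    have "real t \<le> real n" using t by simp
    also have "real n \<le> real (J k) * real k" using jj unfolding n_def by (simp add: mult_right_mono)
    also have "real (J k) * real k \<le> exp (real k * sg) / real k * real k"
      unfolding J_def by (intro mult_right_mono nat_floor_bounds) auto
    also have "\<dots> = exp (real k * sg)" using k by simp
    finally have "real t \<le> exp (real k * (s + eps))" by (simp add: sg_def)
    from T_bound[OF _ k t(1) this] sg show ?thesis by (simp add: sg_def)
  qed
  have ptw: "ennreal_of_enat (T_time (\<lambda>i. X i x) (cramer_rate M (X 1) q) A eps q) \<le> g x"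
    if x: "x \<in> space M" for x
  proof (cases "\<exists>j. good (A + 2 * j) x")
    case True
    define j0 where "j0 = (LEAST j. good (A + 2 * j) x)"
    have g0: "good (A + 2 * j0) x" unfolding j0_def using True by (rule LeastI_ex)
    have T: "ennreal_of_enat (T_time (\<lambda>i. X i x) (ereal s) A eps q) \<le> ennreal (c j0)"
      unfolding c_def by (rule good_T[OF _ _ _ g0]) (use A in auto)
    have ind: "indicator (E j0) x = (1::ennreal)"
    proof (cases j0)
      case 0 then show ?thesis using x by (simp add: E_def)
    next
      case (Suc j')
      then have "\<not> good (A + 2 * j') x" unfolding j0_def using not_less_Least[of j' "\<lambda>j. good (A + 2 * j) x"]
        by (metis j0_def lessI)
      then show ?thesis using Suc x by (simp add: E_def Bad_def)
    qed
    have "\<not> (g x < ennreal (c j0) * indicator (E j0) x)"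
    proof
      assume "g x < ennreal (c j0) * indicator (E j0) x"
      then have "ennreal (c j0) * indicator (E j0) x < ennreal (c j0) * indicator (E j0) x"
        unfolding g_def by (rule ennreal_suminf_lessD)
      then show False by simp
    qed
    then have "ennreal (c j0) * indicator (E j0) x \<le> g x" by (simp add: not_less)
    then show ?thesis using T ind Sig by simp
  next
    case False
    have ind: "indicator (E j) x = (1::ennreal)" for j
      using False x by (cases j) (auto simp: E_def Bad_def)
    have "g x = \<top>"
    proof (rule ccontr)
      assume "g x \<noteq> \<top>"
      then have "(\<Sum>j. ennreal (c j)) \<noteq> \<top>" unfolding g_def ind by simp
      then have "summable c" using c1 by (intro summable_suminf_not_top) (auto intro: order_trans[OF zero_le_one])
      then have "c \<longlonglongrightarrow> 0" by (rule summable_LIMSEQ_zero)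
      then have "eventually (\<lambda>j. c j < 1) sequentially" by (rule order_tendstoD) simp
      then show False using c1 by (auto simp: eventually_sequentially not_less[symmetric])
    qed
    then show ?thesis by simp
  qed
  have int_g: "(\<integral>\<^sup>+x. g x \<partial>M) = (\<Sum>j. ennreal (c j * measure M (E j)))"
  proof -
    have "(\<integral>\<^sup>+x. g x \<partial>M) = (\<Sum>j. \<integral>\<^sup>+x. ennreal (c j) * indicator (E j) x \<partial>M)"
      unfolding g_def using E_sets by (intro nn_integral_suminf) auto
    also have "\<dots> = (\<Sum>j. ennreal (c j * measure M (E j)))"
      using E_sets c0 by (intro suminf_cong) (simp add: nn_integral_cmult_indicator emeasure_eq_measure ennreal_mult)
    finally show ?thesis .
  qed
  define w where "w j = c j * measure M (E j)" for j
  have w0: "w j \<ge> 0" for j using c0[of j] by (simp add: w_def)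
  obtain N0 where N0: "\<And>k. k \<ge> N0 \<Longrightarrow> (k + 2) * sg + 1/2 - exp (k * (eps/2)) / (2 * k) \<le> - k"
    using asy_bound[of "eps/2" sg] eps sg by auto
  have wbound: "w (Suc j) \<le> exp (-1) ^ j" if j: "real (A + 2 * j) \<ge> N0" "A + 2 * j \<ge> m0" for j
  proof -
    define k where "k = A + 2 * j"
    have k: "k > 0" "even k" "k \<ge> m0" "real k \<ge> N0" using A j by (auto simp: k_def)
    define p where "p = r ^ k / 2"
    have rk1: "r ^ k \<le> 1" using r(2,3) by (intro power_le_one) auto
    have p: "0 \<le> p" "p \<le> 1" using rk1 r(2) unfolding p_def by auto
    have pj: "p \<le> prob {x \<in> space M. (\<Sum>i\<in>blk k jj. X i x) \<le> q * real k}" if "jj \<in> {1..J k}" for jj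
    proof -
      have cb: "card (blk k jj) = k" using blk_card[of jj k] that by simp
      have "(f a0 * exp (- \<delta>)) ^ card (blk k jj) / 2 \<le> prob {x \<in> space M. (\<Sum>i\<in>blk k jj. X i x) \<le> q * real (card (blk k jj))}"
        using m0[OF blk_fin[of k jj] blk_sub[of k jj]] cb k by simp
      then show ?thesis unfolding cb p_def r_def .
    qed
    have PB: "measure M (Bad k) \<le> (1 - p) ^ J k"
      unfolding Bad_def good_def by (rule bad_prob[OF p pj])
    also have "\<dots> \<le> exp (- p) ^ J k"
      using p by (intro power_mono) (auto simp: exp_ge_add_one_self[of "-p", simplified] )
    also have "\<dots> = exp (- (real (J k) * p))" by (simp add: exp_of_nat_mult[symmetric])
    also have "\<dots> \<le> exp (1/2 - exp (real k * (eps/2)) / (2 * real k))"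
    proof -
      have Jk: "real (J k) \<ge> exp (real k * sg) / real k - 1" unfolding J_def by (rule nat_floor_bounds) auto
      have rk: "r ^ k = exp (- (real k * (s + \<delta>)))" using r(1) by (simp add: exp_of_nat_mult[symmetric] algebra_simps)
      have "real (J k) * p \<ge> (exp (real k * sg) / real k - 1) * p" using Jk p by (intro mult_right_mono) auto
      moreover have "(exp (real k * sg) / real k - 1) * p = exp (real k * (eps/2)) / (2 * real k) - r ^ k / 2"
      proof -
        have e3: "exp (real k * sg) * exp (- (real k * (s + \<delta>))) = exp (real k * (eps/2))"
          by (simp add: exp_add[symmetric] sg_def \<delta>_def algebra_simps)
        have "(exp (real k * sg) / real k - 1) * p = exp (real k * sg) * exp (- (real k * (s + \<delta>))) / (2 * real k) - r ^ k / 2"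
          unfolding p_def rk using k by (simp add: field_simps)
        then show ?thesis unfolding e3 .
      qed
      moreover have "r ^ k / 2 \<le> 1/2" using rk1 by simp
      ultimately have "real (J k) * p \<ge> exp (real k * (eps/2)) / (2 * real k) - 1/2" by linarith
      then show ?thesis by simp
    qed
    finally have PB': "measure M (Bad k) \<le> exp (1/2 - exp (real k * (eps/2)) / (2 * real k))" .
    have "w (Suc j) = exp (real (k + 2) * sg) * measure M (Bad k)"
      by (simp add: w_def c_def E_def k_def algebra_simps)
    also have "\<dots> \<le> exp (real (k + 2) * sg) * exp (1/2 - exp (real k * (eps/2)) / (2 * real k))"
      using PB' by (intro mult_left_mono) auto
    also have "\<dots> = exp ((real k + 2) * sg + 1/2 - exp (real k * (eps/2)) / (2 * real k))"
      by (simp add: exp_add[symmetric] algebra_simps)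
    also have "\<dots> \<le> exp (- real k)" using N0[OF k(4)] by simp
    also have "\<dots> \<le> exp (- real j)" by (simp add: k_def)
    also have "\<dots> = exp (-1) ^ j" by (simp add: exp_of_nat_mult[symmetric])
    finally show ?thesis .
  qed
  obtain N1 :: nat where N1: "real N1 \<ge> N0" using real_arch_simple by blast
  have "summable (\<lambda>j. w (Suc j))"
  proof (rule summable_comparison_test')
    show "summable (\<lambda>j. exp (-1::real) ^ j)" by (rule summable_geometric) simp
    fix j assume "j \<ge> max N1 m0"
    then have "real (A + 2 * j) \<ge> N0" "A + 2 * j \<ge> m0" using N1 by auto
    then show "norm (w (Suc j)) \<le> exp (-1) ^ j" using wbound w0 by simp
  qed
  then have sw: "summable w" by (simp add: summable_Suc_iff)
  have "(\<integral>\<^sup>+x. ennreal_of_enat (T_time (\<lambda>i. X i x) (cramer_rate M (X 1) q) A eps q) \<partial>M) \<le> (\<integral>\<^sup>+x. g x \<partial>M)"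
    by (intro nn_integral_mono ptw)
  also have "\<dots> = ennreal (\<Sum>j. w j)" unfolding int_g w_def[symmetric] using sw w0 by (simp add: suminf_ennreal2)
  also have "\<dots> < \<infinity>" by simp
  finally show ?thesis .
qed

end

theorem lemmaB3:
  fixes M :: "'a measure" and X :: "nat \<Rightarrow> 'a \<Rightarrow> real"
    and q eps :: real and A :: nat
  assumes "prob_space M"
    and "prob_space.indep_vars M (\<lambda>_. borel) X {1..}"
    and "\<And>i. i \<ge> 1 \<Longrightarrow> distr M borel (X i) = distr M borel (X 1)"
    and "\<And>\<alpha>::real. integrable M (\<lambda>x. exp (\<alpha> * X 1 x))"
    and "(\<integral>x. X 1 x \<partial>M) = 0"
    and "(\<integral>x. (X 1 x)\<^sup>2 \<partial>M) = 1"
    and "q < 0"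
    and "measure M {x \<in> space M. X 1 x < q} > 0"
    and "even A" and "A > 0"
    and "eps > 0"
  shows "(\<integral>\<^sup>+x. ennreal_of_enat (T_time (\<lambda>i. X i x) (cramer_rate M (X 1) q) A eps q) \<partial>M) < \<infinity>"
proof -
  interpret LDsetup M X q
    by (intro LDsetup.intro LDsetup_axioms.intro assms(1-5,7,8))
  show ?thesis by (rule final[OF assms(9-11)])
qed

end
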